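(* Let $g$ be the Lorentzian form on $\mathbb{R}^4$ with matrix $\mathrm{diag}(1,1,1,-c^2)$ in the canonical basis ($c>0$), and let $\mathcal{L}^{\uparrow}_+$ be the proper orthochronous Lorentz group of $g$ (the linear maps preserving $g$, with determinant $1$, and preserving the time orientation). If $\Lambda$ is an additive subgroup of $\mathbb{R}^4$ with $L(\Lambda)\subseteq\Lambda$ for all $L\in\mathcal{L}^{\uparrow}_+$, then $\Lambda=\{0\}$ or $\Lambda=\mathbb{R}^4$. *)

theory Defs
  imports "HOL-Analysis.Analysis"
begin

definition lorentz_form :: "real \<Rightarrow> real^4 \<Rightarrow> real^4 \<Rightarrow> real" where
  "lorentz_form c x y = x$1 * y$1 + x$2 * y$2 + x$3 * y$3 - c^2 * (x$4 * y$4)"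

definition future_timelike :: "real \<Rightarrow> real^4 \<Rightarrow> bool" where
  "future_timelike c x \<longleftrightarrow> lorentz_form c x x < 0 \<and> x$4 > 0"

definition proper_orthochronous_lorentz :: "real \<Rightarrow> (real^4^4) set" where
  "proper_orthochronous_lorentz c =
     {L. (\<forall>x y. lorentz_form c (L *v x) (L *v y) = lorentz_form c x y)
         \<and> det L = 1
         \<and> (\<forall>x. future_timelike c x \<longrightarrow> future_timelike c (L *v x))}"

definition additive_subgroup :: "('a::ab_group_add) set \<Rightarrow> bool" where
  "additive_subgroup S \<longleftrightarrow> 0 \<in> S \<and> (\<forall>x\<in>S. \<forall>y\<in>S. x + y \<in> S) \<and> (\<forall>x\<in>S. - x \<in> S)"

end

theory Submission
  imports Defs
begin
definition gd :: "real \<Rightarrow> 4 \<Rightarrow> real" where "gd c i = (if i = 4 then - (c * c) else 1)"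
definition gmat :: "real \<Rightarrow> real^4^4" where
  "gmat c = (\<chi> i j. if i = j then gd c i else 0)"

lemma if0_mult: "(if P then a else 0) * b = (if P then a*b else (0::real))" by simp

lemma gmat_mv: "gmat c *v y = (\<chi> i. gd c i * y$i)"
  unfolding gmat_def matrix_vector_mult_def
  by (simp add: vec_eq_iff if0_mult sum.delta)

lemma lf_gmat: "lorentz_form c x y = x \<bullet> (gmat c *v y)"
  unfolding gmat_mv lorentz_form_def inner_vec_def sum_4 by (simp add: power2_eq_square gd_def)

lemma prod_4: "prod f (UNIV::4 set) = f 1 * f 2 * f 3 * f 4"
  unfolding UNIV_4 by (simp add: ac_simps)

lemma det_gmat: "det (gmat c) = - (c*c)"
proof -
  have "det (gmat c) = prod (\<lambda>i. gmat c $ i $ i) UNIV"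
    by (rule det_diagonal) (simp add: gmat_def)
  also have "\<dots> = - (c*c)" unfolding prod_4 by (simp add: gmat_def gd_def)
  finally show ?thesis .
qed
lemma det_sq:
  assumes c: "c \<noteq> 0" and pres: "\<forall>x y. lorentz_form c (M *v x) (M *v y) = lorentz_form c x y"
  shows "det M * det M = 1"
proof -
  have "\<forall>y x. x \<bullet> (gmat c *v y) = x \<bullet> ((transpose M ** gmat c ** M) *v y)"
  proof (intro allI)
    fix x y
    have "M *v x = x v* transpose M"
      by (metis transpose_matrix_vector transpose_transpose)
    then have "x \<bullet> (gmat c *v y) = (x v* transpose M) \<bullet> (gmat c *v (M *v y))"
      using pres by (metis lf_gmat)
    also have "\<dots> = x \<bullet> ((transpose M ** gmat c ** M) *v y)"
      unfolding dot_lmul_matrix matrix_vector_mul_assoc matrix_mul_assoc ..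
    finally show "x \<bullet> (gmat c *v y) = x \<bullet> ((transpose M ** gmat c ** M) *v y)" .
  qed
  then have "\<forall>y. gmat c *v y = (transpose M ** gmat c ** M) *v y"
    by (simp add: vector_eq_ldot)
  then have "gmat c = transpose M ** gmat c ** M" by (simp add: matrix_eq)
  then have "det (gmat c) = det M * det (gmat c) * det M"
    by (metis det_mul det_transpose)
  then show ?thesis using c by (simp add: det_gmat)
qed

lemma closed2:
  assumes c: "c \<noteq> 0"
    and H: "\<And>L x. L \<in> proper_orthochronous_lorentz c \<Longrightarrow> x \<in> \<Lambda> \<Longrightarrow> L *v x \<in> \<Lambda>"
    and lin: "linear f"
    and pres: "\<And>x y. lorentz_form c (f x) (f y) = lorentz_form c x y"
    and ft: "\<And>x. future_timelike c x \<Longrightarrow> future_timelike c (f x)"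
    and x: "x \<in> \<Lambda>"
  shows "f (f x) \<in> \<Lambda>"
proof -
  define M where "M = matrix f"
  have Mf: "\<And>x. M *v x = f x" unfolding M_def using matrix_vector_mul(2)[OF lin] by metis
  have "det M * det M = 1" using det_sq[OF c, of M] by (simp add: Mf pres)
  then have "det (M ** M) = 1" by (simp add: det_mul)
  moreover have "\<And>x. (M ** M) *v x = f (f x)" by (simp add: Mf flip: matrix_vector_mul_assoc)
  ultimately have "M ** M \<in> proper_orthochronous_lorentz c"
    unfolding proper_orthochronous_lorentz_def by (simp add: pres ft)
  from H[OF this x] show ?thesis by (simp add: Mf flip: matrix_vector_mul_assoc)
qed

lemma subgroup_mult:
  fixes v :: "real^4"
  assumes G: "additive_subgroup \<Lambda>" and v: "v \<in> \<Lambda>"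
  shows "real n *\<^sub>R v \<in> \<Lambda>"
proof (induction n)
  case 0 then show ?case using G by (simp add: additive_subgroup_def)
next
  case (Suc n)
  have "real (Suc n) *\<^sub>R v = real n *\<^sub>R v + v" by (simp add: algebra_simps)
  then show ?case using Suc G v by (simp add: additive_subgroup_def)
qed

lemma subgroup_diff:
  assumes G: "additive_subgroup \<Lambda>" and "x \<in> \<Lambda>" "y \<in> \<Lambda>"
  shows "x - y \<in> \<Lambda>"
  using assms unfolding additive_subgroup_def by (metis diff_conv_add_uminus)

lemma scale_all:
  fixes v :: "real^4"
  assumes G: "additive_subgroup \<Lambda>" and S: "\<And>s. 0 \<le> s \<Longrightarrow> s \<le> 1 \<Longrightarrow> s *\<^sub>R v \<in> \<Lambda>"
  shows "t *\<^sub>R v \<in> \<Lambda>"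
proof -
  define n where "n = nat (ceiling \<bar>t\<bar>) + 1"
  have n1: "real n \<ge> 1" and nt: "real n \<ge> \<bar>t\<bar>" unfolding n_def by linarith+
  define s where "s = \<bar>t\<bar> / real n"
  have "0 \<le> s" "s \<le> 1" using n1 nt unfolding s_def by (auto simp: divide_simps)
  then have "real n *\<^sub>R (s *\<^sub>R v) \<in> \<Lambda>" using subgroup_mult[OF G S] by blast
  moreover have "real n *\<^sub>R (s *\<^sub>R v) = \<bar>t\<bar> *\<^sub>R v" using n1 unfolding s_def by (simp add: scaleR_scaleR)
  ultimately have a: "\<bar>t\<bar> *\<^sub>R v \<in> \<Lambda>" by metis
  show ?thesis
  proof (cases "t \<ge> 0")
    case True then show ?thesis using a by simp
  next
    case False
    then have "t *\<^sub>R v = - (\<bar>t\<bar> *\<^sub>R v)" by simp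
    then show ?thesis using a G unfolding additive_subgroup_def by metis
  qed
qed

definition rot12 :: "real \<Rightarrow> real \<Rightarrow> real^4 \<Rightarrow> real^4" where
  "rot12 p q x = (\<chi> i. if i = 1 then p * x$1 - q * x$2 else if i = 2 then q * x$1 + p * x$2 else x$i)"
definition rot13 :: "real \<Rightarrow> real \<Rightarrow> real^4 \<Rightarrow> real^4" where
  "rot13 p q x = (\<chi> i. if i = 1 then p * x$1 - q * x$3 else if i = 3 then q * x$1 + p * x$3 else x$i)"
definition boost :: "real \<Rightarrow> real \<Rightarrow> real \<Rightarrow> real^4 \<Rightarrow> real^4" where
  "boost c a d x = (\<chi> i. if i = 1 then a * x$1 + c*c*d * x$4 else if i = 4 then d * x$1 + a * x$4 else x$i)"

lemma rot12_c [simp]: "rot12 p q x $ 1 = p * x$1 - q * x$2" "rot12 p q x $ 2 = q * x$1 + p * x$2"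
  "rot12 p q x $ 3 = x$3" "rot12 p q x $ 4 = x$4"
  by (simp_all add: rot12_def)
lemma rot13_c [simp]: "rot13 p q x $ 1 = p * x$1 - q * x$3" "rot13 p q x $ 3 = q * x$1 + p * x$3"
  "rot13 p q x $ 2 = x$2" "rot13 p q x $ 4 = x$4"
  by (simp_all add: rot13_def)
lemma boost_c [simp]: "boost c a d x $ 1 = a * x$1 + c*c*d * x$4" "boost c a d x $ 4 = d * x$1 + a * x$4"
  "boost c a d x $ 2 = x$2" "boost c a d x $ 3 = x$3"
  by (simp_all add: boost_def)

lemma vec4_eq: "(x::real^4) = y \<longleftrightarrow> x$1 = y$1 \<and> x$2 = y$2 \<and> x$3 = y$3 \<and> x$4 = y$4"
  by (simp add: vec_eq_iff forall_4)

lemma rot12_lin: "linear (rot12 p q)"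
  by (rule linearI) (simp_all add: vec4_eq algebra_simps)
lemma rot13_lin: "linear (rot13 p q)"
  by (rule linearI) (simp_all add: vec4_eq algebra_simps)
lemma boost_lin: "linear (boost c a d)"
  by (rule linearI) (simp_all add: vec4_eq algebra_simps)

lemma rot12_pres: "p*p + q*q = 1 \<Longrightarrow> lorentz_form c (rot12 p q x) (rot12 p q y) = lorentz_form c x y"
  unfolding lorentz_form_def by simp algebra
lemma rot13_pres: "p*p + q*q = 1 \<Longrightarrow> lorentz_form c (rot13 p q x) (rot13 p q y) = lorentz_form c x y"
  unfolding lorentz_form_def by simp algebra
lemma boost_pres: "a*a - c*c*d*d = 1 \<Longrightarrow> lorentz_form c (boost c a d x) (boost c a d y) = lorentz_form c x y"
  unfolding lorentz_form_def by (simp add: power2_eq_square) algebra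


lemma rot12_ft: "p*p + q*q = 1 \<Longrightarrow> future_timelike c x \<Longrightarrow> future_timelike c (rot12 p q x)"
  unfolding future_timelike_def using rot12_pres[of p q c x x] by simp
lemma rot13_ft: "p*p + q*q = 1 \<Longrightarrow> future_timelike c x \<Longrightarrow> future_timelike c (rot13 p q x)"
  unfolding future_timelike_def using rot13_pres[of p q c x x] by simp

lemma boost_ft:
  assumes c: "c > 0" and a: "a > 0" and ad: "a*a - c*c*d*d = 1" and ft: "future_timelike c x"
  shows "future_timelike c (boost c a d x)"
proof -
  have f: "lorentz_form c x x < 0" and x4: "x$4 > 0" using ft unfolding future_timelike_def by auto
  have sq: "x$1 * x$1 < (c * x$4) * (c * x$4)"
  proof -
    have "0 \<le> x$2 * x$2" "0 \<le> x$3 * x$3" by simp_all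
    moreover have "(c * x$4) * (c * x$4) = c^2 * (x$4 * x$4)" by (simp add: power2_eq_square algebra_simps)
    ultimately show ?thesis using f unfolding lorentz_form_def by linarith
  qed
  have x1: "\<bar>x$1\<bar> < c * x$4"
  proof (rule ccontr)
    assume "\<not> \<bar>x$1\<bar> < c * x$4"
    then have h: "c * x$4 \<le> \<bar>x$1\<bar>" by simp
    have "0 \<le> c * x$4" using c x4 by simp
    then have "(c * x$4) * (c * x$4) \<le> \<bar>x$1\<bar> * \<bar>x$1\<bar>" using h by (intro mult_mono) auto
    then show False using sq by (simp add: abs_mult_self_eq)
  qed
  have cd: "c * \<bar>d\<bar> < a"
  proof (rule ccontr)
    assume "\<not> c * \<bar>d\<bar> < a"
    then have h: "a \<le> c * \<bar>d\<bar>" by simp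
    then have "a * a \<le> (c * \<bar>d\<bar>) * (c * \<bar>d\<bar>)" using a by (intro mult_mono) auto
    also have "\<dots> = c*c*d*d" by (simp add: abs_mult_self_eq algebra_simps)
    finally show False using ad by linarith
  qed
  have "- (\<bar>d\<bar> * \<bar>x$1\<bar>) \<le> d * x$1" by (simp add: abs_mult[symmetric] abs_le_iff)
  moreover have "\<bar>d\<bar> * \<bar>x$1\<bar> \<le> \<bar>d\<bar> * (c * x$4)" using x1 by (intro mult_left_mono) auto
  moreover have "(c * \<bar>d\<bar>) * x$4 < a * x$4" using cd x4 by (intro mult_strict_right_mono)
  ultimately have "boost c a d x $ 4 > 0" by (simp add: algebra_simps)
  moreover have "lorentz_form c (boost c a d x) (boost c a d x) < 0" using boost_pres[OF ad] f by simp
  ultimately show ?thesis unfolding future_timelike_def by simp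
qed


theorem proposition3p8:
  fixes c :: real and \<Lambda> :: "(real^4) set"
  assumes "c > 0"
    and "additive_subgroup \<Lambda>"
    and "\<And>L x. L \<in> proper_orthochronous_lorentz c \<Longrightarrow> x \<in> \<Lambda> \<Longrightarrow> L *v x \<in> \<Lambda>"
  shows "\<Lambda> = {0} \<or> \<Lambda> = UNIV"
proof -
  note c = assms(1) and G = assms(2) and H = assms(3)
  have c0: "c \<noteq> 0" using c by simp
  have add: "\<And>x y. x \<in> \<Lambda> \<Longrightarrow> y \<in> \<Lambda> \<Longrightarrow> x + y \<in> \<Lambda>"
    and neg: "\<And>x. x \<in> \<Lambda> \<Longrightarrow> - x \<in> \<Lambda>" and zero: "0 \<in> \<Lambda>"
    using G unfolding additive_subgroup_def by auto
  have R12: "\<And>p q x. p*p + q*q = 1 \<Longrightarrow> x \<in> \<Lambda> \<Longrightarrow> rot12 p q (rot12 p q x) \<in> \<Lambda>"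
    by (rule closed2[OF c0 H rot12_lin]) (auto intro: rot12_pres rot12_ft)
  have R13: "\<And>p q x. p*p + q*q = 1 \<Longrightarrow> x \<in> \<Lambda> \<Longrightarrow> rot13 p q (rot13 p q x) \<in> \<Lambda>"
    by (rule closed2[OF c0 H rot13_lin]) (auto intro: rot13_pres rot13_ft)
  define a where "a = sqrt (1 + c*c)"
  have a0: "a > 0" unfolding a_def by (simp add: add_pos_nonneg)
  have aa: "a * a = 1 + c*c" unfolding a_def by (simp add: add_nonneg_nonneg)
  have ad: "a*a - c*c*1*1 = 1" using aa by simp
  have B: "\<And>x. x \<in> \<Lambda> \<Longrightarrow> boost c a 1 (boost c a 1 x) \<in> \<Lambda>"
    by (rule closed2[OF c0 H boost_lin]) (auto intro: boost_pres[OF ad] boost_ft[OF c a0 ad])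
  define h where "h = sqrt 2 / 2"
  have hh: "h * h = 1/2" unfolding h_def by simp
  have hh1: "h*h + h*h = 1" using hh by simp
  have h0: "h \<noteq> 0" unfolding h_def by simp
  have P12: "\<And>y t. y \<in> \<Lambda> \<Longrightarrow> t *\<^sub>R (\<chi> i. if i = 1 then y$1 else if i = 2 then y$2 else 0) \<in> \<Lambda>"
  proof (rule scale_all[OF G])
    fix y :: "real^4" and s :: real assume y: "y \<in> \<Lambda>" and s: "0 \<le> s" "s \<le> 1"
    define q where "q = sqrt s / 2"
    have qq: "4 * (q*q) = s" unfolding q_def using s by simp
    define p where "p = sqrt (1 - q*q)"
    have pp: "p*p = 1 - q*q" unfolding p_def using qq s by simp
    have pq1: "p*p + q*q = 1" "p*p + (-q)*(-q) = 1" using pp by simp_all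
    have "rot12 p q (rot12 p q y) + rot12 p (-q) (rot12 p (-q) y) - y - y \<in> \<Lambda>"
      using R12[OF pq1(1) y] R12[OF pq1(2) y] y G by (intro subgroup_diff add) auto
    moreover have "rot12 p q (rot12 p q y) + rot12 p (-q) (rot12 p (-q) y) - y - y
        = - (s *\<^sub>R (\<chi> i. if i = 1 then y$1 else if i = 2 then y$2 else 0))"
      using pp qq by (simp add: vec4_eq) algebra
    ultimately show "s *\<^sub>R (\<chi> i. if i = 1 then y$1 else if i = 2 then y$2 else 0) \<in> \<Lambda>"
      using neg by force
  qed
  have P13: "\<And>y t. y \<in> \<Lambda> \<Longrightarrow> t *\<^sub>R (\<chi> i. if i = 1 then y$1 else if i = 3 then y$3 else 0) \<in> \<Lambda>"
  proof (rule scale_all[OF G])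
    fix y :: "real^4" and s :: real assume y: "y \<in> \<Lambda>" and s: "0 \<le> s" "s \<le> 1"
    define q where "q = sqrt s / 2"
    have qq: "4 * (q*q) = s" unfolding q_def using s by simp
    define p where "p = sqrt (1 - q*q)"
    have pp: "p*p = 1 - q*q" unfolding p_def using qq s by simp
    have pq1: "p*p + q*q = 1" "p*p + (-q)*(-q) = 1" using pp by simp_all
    have "rot13 p q (rot13 p q y) + rot13 p (-q) (rot13 p (-q) y) - y - y \<in> \<Lambda>"
      using R13[OF pq1(1) y] R13[OF pq1(2) y] y G by (intro subgroup_diff add) auto
    moreover have "rot13 p q (rot13 p q y) + rot13 p (-q) (rot13 p (-q) y) - y - y
        = - (s *\<^sub>R (\<chi> i. if i = 1 then y$1 else if i = 3 then y$3 else 0))"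
      using pp qq by (simp add: vec4_eq) algebra
    ultimately show "s *\<^sub>R (\<chi> i. if i = 1 then y$1 else if i = 3 then y$3 else 0) \<in> \<Lambda>"
      using neg by force
  qed
  show ?thesis
  proof (cases "\<Lambda> = {0}")
    case True then show ?thesis by simp
  next
    case False
    then obtain x where x: "x \<in> \<Lambda>" "x \<noteq> 0" using zero by blast
    have "\<exists>y\<in>\<Lambda>. y$1 \<noteq> 0"
    proof -
      have "x$1 \<noteq> 0 \<or> x$2 \<noteq> 0 \<or> x$3 \<noteq> 0 \<or> (x$1 = 0 \<and> x$4 \<noteq> 0)"
        using x(2) by (auto simp: vec4_eq)
      moreover
      { assume "x$1 \<noteq> 0" then have ?thesis using x by blast }
      moreover
      { assume "x$2 \<noteq> 0"
        then have "rot12 h h (rot12 h h x) $ 1 \<noteq> 0" using hh h0 by (simp add: algebra_simps)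
        then have ?thesis using R12[OF hh1 x(1)] by blast }
      moreover
      { assume "x$3 \<noteq> 0"
        then have "rot13 h h (rot13 h h x) $ 1 \<noteq> 0" using hh h0 by (simp add: algebra_simps)
        then have ?thesis using R13[OF hh1 x(1)] by blast }
      moreover
      { assume "x$1 = 0 \<and> x$4 \<noteq> 0"
        then have "boost c a 1 (boost c a 1 x) $ 1 \<noteq> 0" using a0 c by simp
        then have ?thesis using B[OF x(1)] by blast }
      ultimately show ?thesis by blast
    qed
    then obtain y where y: "y \<in> \<Lambda>" "y$1 \<noteq> 0" by blast
    define z :: "real^4" where "z = (1::real) *\<^sub>R (\<chi> i. if i = 1 then y$1 else if i = 2 then y$2 else 0)"
    have z: "z \<in> \<Lambda>" unfolding z_def by (rule P12[OF y(1)])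
    have e1: "\<And>t. t *\<^sub>R (axis 1 1::real^4) \<in> \<Lambda>"
    proof -
      fix t :: real
      have "(t / y$1) *\<^sub>R (\<chi> i. if i = 1 then z$1 else if i = 3 then z$3 else 0) \<in> \<Lambda>"
        by (rule P13[OF z])
      moreover have "(t / y$1) *\<^sub>R (\<chi> i. if i = 1 then z$1 else if i = 3 then z$3 else 0)
          = t *\<^sub>R (axis 1 1::real^4)"
        using y(2) by (simp add: vec4_eq z_def axis_def)
      ultimately show "t *\<^sub>R (axis 1 1::real^4) \<in> \<Lambda>" by simp
    qed
    have e2: "\<And>t. t *\<^sub>R (axis 2 1::real^4) \<in> \<Lambda>"
    proof -
      fix t :: real
      have "rot12 h h (rot12 h h (t *\<^sub>R (axis 1 1::real^4))) = t *\<^sub>R (axis 2 1::real^4)"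
        using hh by (simp add: vec4_eq axis_def algebra_simps)
      then show "t *\<^sub>R (axis 2 1::real^4) \<in> \<Lambda>" using R12[OF hh1 e1[of t]] by simp
    qed
    have e3: "\<And>t. t *\<^sub>R (axis 3 1::real^4) \<in> \<Lambda>"
    proof -
      fix t :: real
      have "rot13 h h (rot13 h h (t *\<^sub>R (axis 1 1::real^4))) = t *\<^sub>R (axis 3 1::real^4)"
        using hh by (simp add: vec4_eq axis_def algebra_simps)
      then show "t *\<^sub>R (axis 3 1::real^4) \<in> \<Lambda>" using R13[OF hh1 e1[of t]] by simp
    qed
    have e4: "\<And>t. t *\<^sub>R (axis 4 1::real^4) \<in> \<Lambda>"
    proof -
      fix t :: real
      define u where "u = t / (2 * a)"
      have "boost c a 1 (boost c a 1 (u *\<^sub>R (axis 1 1::real^4))) - ((a*a + c*c) * u) *\<^sub>R (axis 1 1::real^4) = t *\<^sub>R (axis 4 1::real^4)"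
        using a0 by (simp add: vec4_eq axis_def u_def field_simps)
      moreover have "boost c a 1 (boost c a 1 (u *\<^sub>R (axis 1 1::real^4))) - ((a*a + c*c) * u) *\<^sub>R (axis 1 1::real^4) \<in> \<Lambda>"
        using B[OF e1[of u]] e1 by (intro subgroup_diff[OF G])
      ultimately show "t *\<^sub>R (axis 4 1::real^4) \<in> \<Lambda>" by simp
    qed
    have "\<And>v. v \<in> \<Lambda>"
    proof -
      fix v :: "real^4"
      have "v = ((v$1) *\<^sub>R (axis 1 1::real^4) + (v$2) *\<^sub>R (axis 2 1::real^4)) + ((v$3) *\<^sub>R (axis 3 1::real^4) + (v$4) *\<^sub>R (axis 4 1::real^4))"
        by (simp add: vec4_eq axis_def)
      then show "v \<in> \<Lambda>" using add e1 e2 e3 e4 by metis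
    qed
    then show ?thesis by blast
  qed
qed

end
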